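(* Let $n\ge 4$ and let $G$ be a graph on $n$ vertices with non-negative integer weights on its edges. If the total weight of the subgraph of $G$ spanned by any four vertices is at least $3$, then the total weight of $G$ is at least $\left\lceil\tfrac{1}{3}n(n-2)\right\rceil$.
   Context: The total weight of a (sub)graph is the sum of the weights of its edges; the subgraph spanned by a set of vertices consists of those vertices and all edges of $G$ between them. *)

theory Defs
  imports Complex_Main
begin

definition simple_graph :: "'a set \<Rightarrow> 'a set set \<Rightarrow> bool" where
  "simple_graph V E \<longleftrightarrow> finite V \<and> (\<forall>e\<in>E. e \<subseteq> V \<and> card e = 2)"

definition span_weight :: "'a set set \<Rightarrow> ('a set \<Rightarrow> nat) \<Rightarrow> 'a set \<Rightarrow> nat" where
  "span_weight E w S = (\<Sum>e\<in>{e\<in>E. e \<subseteq> S}. w e)"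

definition total_weight :: "'a set set \<Rightarrow> ('a set \<Rightarrow> nat) \<Rightarrow> nat" where
  "total_weight E w = (\<Sum>e\<in>E. w e)"

end

theory Submission
  imports Defs
begin

lemma dc:
  assumes fin: "finite V" and E: "\<forall>e\<in>E. e \<subseteq> V \<and> card e = 2"
  shows "(\<Sum>v\<in>V. total_weight {e\<in>E. e \<subseteq> V - {v}} w) = total_weight E w * (card V - 2)"
proof -
  have finE: "finite E" using E fin
    by (meson Pow_iff finite_Pow_iff rev_finite_subset subsetI)
  have "(\<Sum>v\<in>V. total_weight {e\<in>E. e \<subseteq> V - {v}} w)
      = (\<Sum>v\<in>V. \<Sum>e\<in>E. if v \<notin> e then w e else 0)"
  proof (rule sum.cong[OF refl])
    fix v assume "v \<in> V"
    have "total_weight {e\<in>E. e \<subseteq> V - {v}} w = (\<Sum>e\<in>E. if e \<subseteq> V - {v} then w e else 0)"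
      unfolding total_weight_def using finE by (simp add: sum.inter_filter)
    also have "\<dots> = (\<Sum>e\<in>E. if v \<notin> e then w e else 0)"
      by (rule sum.cong[OF refl]) (use E in auto)
    finally show "total_weight {e\<in>E. e \<subseteq> V - {v}} w = (\<Sum>e\<in>E. if v \<notin> e then w e else 0)" .
  qed
  also have "\<dots> = (\<Sum>e\<in>E. \<Sum>v\<in>V. if v \<notin> e then w e else 0)"
    by (rule sum.swap)
  also have "\<dots> = (\<Sum>e\<in>E. w e * (card V - 2))"
  proof (rule sum.cong[OF refl])
    fix e assume e: "e \<in> E"
    have "(\<Sum>v\<in>V. if v \<notin> e then w e else 0) = (\<Sum>v\<in>{v\<in>V. v \<notin> e}. w e)"
      using fin by (simp only: sum.inter_filter[symmetric])
    also have "\<dots> = w e * card (V - e)"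
      by (simp add: set_diff_eq)
    also have "card (V - e) = card V - 2"
    proof -
      have "e \<subseteq> V" "card e = 2" using e E by auto
      moreover have "finite e" using \<open>e \<subseteq> V\<close> fin finite_subset by blast
      ultimately show ?thesis by (simp add: card_Diff_subset)
    qed
    finally show "(\<Sum>v\<in>V. if v \<notin> e then w e else 0) = w e * (card V - 2)" by simp
  qed
  also have "\<dots> = total_weight E w * (card V - 2)"
    unfolding total_weight_def by (simp add: sum_distrib_right)
  finally show ?thesis .
qed

lemma fin_arith:
  fixes n :: int
  assumes "n * (n - 1) * (n - 3) \<le> n * (n - 2) * (n - 2) - 2 * (n - 2)"
    "n * (n - 1) * (n - 3) = n * (n - 2) * (n - 2) - n" "5 \<le> n"
  shows False
proof -
  have "n * (n - 2) * (n - 2) - n \<le> n * (n - 2) * (n - 2) - 2 * (n - 2)"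
    using assms(1,2) by simp
  hence "2 * (n - 2) \<le> n" by simp
  thus False using assms(3) by presburger
qed

lemma arith_step:
  fixes T n :: int
  assumes "n \<ge> 5" and "3 * T * (n - 2) \<ge> n * (n - 1) * (n - 3)"
  shows "3 * T \<ge> n * (n - 2)"
proof (rule ccontr)
  assume "\<not> ?thesis"
  hence lt: "3 * T < n * (n - 2)" by simp
  define q where "q = n div 3"
  define r where "r = n mod 3"
  have nqr: "n = 3 * q + r" unfolding q_def r_def by simp
  have r3: "r = 0 \<or> r = 1 \<or> r = 2" unfolding r_def by auto
  define M where "M = 3 * q * q + 2 * q * r - 2 * q"
  have eq: "n * (n - 2) = 3 * M + r * (r - 2)" unfolding M_def nqr by (simp add: algebra_simps)
  have c: "r * (r - 2) = 0 \<or> r * (r - 2) = -1" using r3 by auto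
  have le: "3 * T \<le> n * (n - 2) - 2"
  proof -
    have "3 * T < 3 * M + r * (r - 2)" using lt eq by simp
    hence "3 * T \<le> 3 * M + r * (r - 2) - 2" using c by presburger
    thus ?thesis using eq by simp
  qed
  have "3 * T * (n - 2) \<le> (n * (n - 2) - 2) * (n - 2)"
    using le assms(1) by (intro mult_right_mono) auto
  with assms(2) have "n * (n - 1) * (n - 3) \<le> (n * (n - 2) - 2) * (n - 2)" by linarith
  hence "n * (n - 1) * (n - 3) \<le> n * (n - 2) * (n - 2) - 2 * (n - 2)" by (simp add: algebra_simps)
  moreover have "n * (n - 1) * (n - 3) = n * (n - 2) * (n - 2) - n" by (simp add: algebra_simps)
  ultimately show False using assms(1) by (rule fin_arith)
qed

lemma main:
  "finite V \<Longrightarrow> card V = n \<Longrightarrow> n \<ge> 4 \<Longrightarrow> (\<forall>e\<in>E. e \<subseteq> V \<and> card e = 2) \<Longrightarrow>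
   (\<forall>S. S \<subseteq> V \<and> card S = 4 \<longrightarrow> span_weight E w S \<ge> 3) \<Longrightarrow>
   3 * total_weight E w \<ge> n * (n - 2)"
proof (induction n arbitrary: V E)
  case 0 then show ?case by simp
next
  case (Suc m)
  show ?case
  proof (cases "m = 3")
    case True
    have "span_weight E w V \<ge> 3" using Suc.prems True by auto
    moreover have "span_weight E w V = total_weight E w"
      unfolding span_weight_def total_weight_def using Suc.prems(4)
      by (metis (mono_tags, lifting) mem_Collect_eq subsetI subset_antisym)
    ultimately show ?thesis using True by simp
  next
    case False
    hence m4: "m \<ge> 4" using Suc.prems(3) by simp
    have IH: "3 * total_weight {e\<in>E. e \<subseteq> V - {v}} w \<ge> m * (m - 2)" if v: "v \<in> V" for v
    proof (rule Suc.IH)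
      show "finite (V - {v})" using Suc.prems by simp
      show "card (V - {v}) = m" using Suc.prems v by simp
      show "4 \<le> m" by fact
      show "\<forall>e\<in>{e \<in> E. e \<subseteq> V - {v}}. e \<subseteq> V - {v} \<and> card e = 2" using Suc.prems by auto
      show "\<forall>S. S \<subseteq> V - {v} \<and> card S = 4 \<longrightarrow> 3 \<le> span_weight {e \<in> E. e \<subseteq> V - {v}} w S"
      proof (intro allI impI)
        fix S assume S: "S \<subseteq> V - {v} \<and> card S = 4"
        have "{e \<in> {e \<in> E. e \<subseteq> V - {v}}. e \<subseteq> S} = {e\<in>E. e \<subseteq> S}" using S by auto
        hence "span_weight {e \<in> E. e \<subseteq> V - {v}} w S = span_weight E w S"
          unfolding span_weight_def by simp
        thus "3 \<le> span_weight {e \<in> E. e \<subseteq> V - {v}} w S" using S Suc.prems(5) by auto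
      qed
    qed
    have "(\<Sum>v\<in>V. 3 * total_weight {e\<in>E. e \<subseteq> V - {v}} w) \<ge> (\<Sum>v\<in>V. m * (m - 2))"
      by (rule sum_mono) (use IH in auto)
    hence "3 * total_weight E w * (Suc m - 2) \<ge> Suc m * (m * (m - 2))"
      using dc[OF Suc.prems(1) Suc.prems(4), of w] Suc.prems(2)
      by (simp add: sum_distrib_left[symmetric] mult.assoc)
    hence h: "int (3 * total_weight E w * (Suc m - 2)) \<ge> int (Suc m * (m * (m - 2)))" by linarith
    have a: "int (3 * total_weight E w * (Suc m - 2)) = 3 * int (total_weight E w) * (int m - 1)"
      using m4 by (simp add: of_nat_diff)
    have c: "int (m - 2) = int m - 2" using m4 by simp
    have b: "int (Suc m * (m * (m - 2))) = (1 + int m) * (int m * (int m - 2))"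
      by (simp only: of_nat_mult of_nat_Suc c)
    have "(1 + int m) * (int m * (int m - 2)) \<le> 3 * int (total_weight E w) * (int m - 1)"
      using h a b by linarith
    hence "3 * int (total_weight E w) * ((int m + 1) - 2) \<ge> (int m + 1) * ((int m + 1) - 1) * ((int m + 1) - 3)"
      by (simp add: algebra_simps)
    hence "3 * int (total_weight E w) \<ge> (int m + 1) * ((int m + 1) - 2)"
      using m4 by (intro arith_step) auto
    moreover have "int (Suc m * (Suc m - 2)) = (int m + 1) * ((int m + 1) - 2)"
      using m4 by (simp add: of_nat_diff algebra_simps)
    ultimately have "int (3 * total_weight E w) \<ge> int (Suc m * (Suc m - 2))"
      by simp
    thus ?thesis by linarith
  qed
qed

theorem theorem1p10:
  fixes V :: "'a set" and E :: "'a set set" and w :: "'a set \<Rightarrow> nat" and n :: nat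
  assumes "simple_graph V E"
    and "card V = n"
    and "n \<ge> 4"
    and "\<forall>S. S \<subseteq> V \<and> card S = 4 \<longrightarrow> span_weight E w S \<ge> 3"
  shows "int (total_weight E w) \<ge> ceiling (real n * (real n - 2) / 3)"
proof -
  have "3 * total_weight E w \<ge> n * (n - 2)"
    using main[of V n E w] assms unfolding simple_graph_def by auto
  hence le: "real (n * (n - 2)) \<le> real (3 * total_weight E w)"
    by (simp only: of_nat_le_iff)
  have "real n * (real n - 2) = real (n * (n - 2))"
    using assms(3) by (simp add: of_nat_diff)
  also have "\<dots> \<le> real (3 * total_weight E w)" by (rule le)
  also have "\<dots> = 3 * real (total_weight E w)" by simp
  finally have "real n * (real n - 2) / 3 \<le> real (total_weight E w)"
    by simp
  hence "ceiling (real n * (real n - 2) / 3) \<le> ceiling (real (total_weight E w))"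
    by (rule ceiling_mono)
  thus ?thesis by simp
qed

end
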